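(* Let $\mathcal G$ be a finite (not necessarily connected) groupoid and $\alpha=(S_g,\alpha_g)_{g\in\mathcal G}$ a unital global action of $\mathcal G$ on a commutative ring $S=\bigoplus_{y\in\mathcal G_0}S_y$, with $S_g=S1_g$ and $1_g\ne0$ for all $g$, such that $S$ is an $\alpha$-partial Galois extension of $R=S^{\alpha_{\mathcal G}}$. Let $\mathcal G_1,\dots,\mathcal G_r$ be the connected components of $\mathcal G$. Let $\mathcal H$ be a wide subgroupoid of $\mathcal G$, put $\mathcal H_j=\mathcal H\cap\mathcal G_j$, let $\mathcal H_{j,1},\dots,\mathcal H_{j,n_j}$ be the connected components of $\mathcal H_j$ with object sets $Y_{j,1},\dots,Y_{j,n_j}$, and choose $y_{j,i}\in Y_{j,i}$. Then $$S^{\alpha_{\mathcal H}}\simeq\bigoplus_{j=1}^r\bigoplus_{i=1}^{n_j}S_{y_{j,i}}^{\alpha_{\mathcal H_{j,i}(y_{j,i})}}.$$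
   Context: A groupoid is a small category with all morphisms invertible; $\mathcal G_0$ is its object set (identified with identity morphisms), $s(g),t(g)$ source and target, $\mathcal G(x,y)=\{g:s(g)=x,t(g)=y\}$, $\mathcal G(x)=\mathcal G(x,x)$; $gh$ defined iff $s(g)=t(h)$; connected components are full subgroupoids on classes of $x\sim y\iff\mathcal G(x,y)\ne\emptyset$; a subgroupoid is wide if it contains all objects. A partial action $\alpha=(S_g,\alpha_g)_{g\in\mathcal G}$ on a ring $S$: for each $g$, $S_{t(g)}$ is an ideal of $S$, $S_g$ an ideal of $S_{t(g)}$, $\alpha_g:S_{g^{-1}}\to S_g$ a ring isomorphism; $\alpha_x=\mathrm{id}_{S_x}$; for composable $(g,h)$, $\alpha_h^{-1}(S_{g^{-1}}\cap S_h)\subseteq S_{(gh)^{-1}}$ and $\alpha_g\alpha_h(a)=\alpha_{gh}(a)$ there. It is global if $\alpha_g\alpha_h=\alpha_{gh}$ for all composable pairs; unital if $S_g=S1_g$ with $1_g$ a central idempotent. For a subgroupoid $\mathcal K$ and subring $A\subseteq S$, $A^{\alpha_{\mathcal K}}=\{a\in A:\alpha_k(a1_{k^{-1}})=a1_k\ \forall k\in\mathcal K\}$; in particular $S_{y}^{\alpha_{\mathcal H_{j,i}(y)}}$ is the subring of $S_y$ fixed by the isotropy group $\mathcal H_{j,i}(y)$. $S$ is an $\alpha$-partial Galois extension of $R=S^{\alpha_{\mathcal G}}$ if there exist $m\ge1$, $a_i,b_i\in S$ with $\sum_{i=1}^m a_i\alpha_g(b_i1_{g^{-1}})=\delta_{z,g}1_z$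 for all $z\in\mathcal G_0$, $g\in\mathcal G$ (i.e. $1_g$ if $g\in\mathcal G_0$, $0$ otherwise). *)

theory Defs
  imports Main "HOL-Library.FuncSet"
begin

(* Objects are identified with identity morphisms: G0 = s ` G. *)

definition groupoid ::
  "'g set \<Rightarrow> ('g \<Rightarrow> 'g) \<Rightarrow> ('g \<Rightarrow> 'g) \<Rightarrow> ('g \<Rightarrow> 'g \<Rightarrow> 'g) \<Rightarrow> ('g \<Rightarrow> 'g) \<Rightarrow> bool" where
  "groupoid G s t m iv \<longleftrightarrow>
     (\<forall>g\<in>G. s g \<in> G \<and> t g \<in> G \<and> s (s g) = s g \<and> t (s g) = s g
             \<and> s (t g) = t g \<and> t (t g) = t g) \<and>
     (\<forall>g\<in>G. \<forall>h\<in>G. s g = t h \<longrightarrow> m g h \<in> G \<and> s (m g h) = s h \<and> t (m g h) = t g) \<and>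
     (\<forall>f\<in>G. \<forall>g\<in>G. \<forall>h\<in>G. s f = t g \<longrightarrow> s g = t h \<longrightarrow> m (m f g) h = m f (m g h)) \<and>
     (\<forall>g\<in>G. m (t g) g = g \<and> m g (s g) = g) \<and>
     (\<forall>g\<in>G. iv g \<in> G \<and> s (iv g) = t g \<and> t (iv g) = s g
             \<and> m g (iv g) = t g \<and> m (iv g) g = s g)"

definition objs :: "'g set \<Rightarrow> ('g \<Rightarrow> 'g) \<Rightarrow> 'g set" where
  "objs G s = s ` G"

definition subgroupoid ::
  "'g set \<Rightarrow> 'g set \<Rightarrow> ('g \<Rightarrow> 'g) \<Rightarrow> ('g \<Rightarrow> 'g) \<Rightarrow> ('g \<Rightarrow> 'g \<Rightarrow> 'g) \<Rightarrow> ('g \<Rightarrow> 'g) \<Rightarrow> bool" where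
  "subgroupoid H G s t m iv \<longleftrightarrow> H \<subseteq> G \<and>
     (\<forall>h\<in>H. s h \<in> H \<and> t h \<in> H \<and> iv h \<in> H) \<and>
     (\<forall>g\<in>H. \<forall>h\<in>H. s g = t h \<longrightarrow> m g h \<in> H)"

definition wide_subgroupoid ::
  "'g set \<Rightarrow> 'g set \<Rightarrow> ('g \<Rightarrow> 'g) \<Rightarrow> ('g \<Rightarrow> 'g) \<Rightarrow> ('g \<Rightarrow> 'g \<Rightarrow> 'g) \<Rightarrow> ('g \<Rightarrow> 'g) \<Rightarrow> bool" where
  "wide_subgroupoid H G s t m iv \<longleftrightarrow> subgroupoid H G s t m iv \<and> objs G s \<subseteq> H"

definition gconn :: "'g set \<Rightarrow> ('g \<Rightarrow> 'g) \<Rightarrow> ('g \<Rightarrow> 'g) \<Rightarrow> 'g \<Rightarrow> 'g \<Rightarrow> bool" where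
  "gconn K s t x y \<longleftrightarrow> (\<exists>k\<in>K. s k = x \<and> t k = y)"

definition components :: "'g set \<Rightarrow> ('g \<Rightarrow> 'g) \<Rightarrow> ('g \<Rightarrow> 'g) \<Rightarrow> 'g set set" where
  "components K s t =
     {{k \<in> K. s k \<in> {y \<in> objs K s. gconn K s t x y}} | x. x \<in> objs K s}"

definition isotropy :: "'g set \<Rightarrow> ('g \<Rightarrow> 'g) \<Rightarrow> ('g \<Rightarrow> 'g) \<Rightarrow> 'g \<Rightarrow> 'g set" where
  "isotropy K s t y = {k \<in> K. s k = y \<and> t k = y}"

(* the ideal S_g = S 1_g of a unital partial action, with e g = 1_g *)
definition Sg :: "('g \<Rightarrow> 'a::comm_ring_1) \<Rightarrow> 'g \<Rightarrow> 'a set" where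
  "Sg e g = {a * e g | a. True}"

(* unital partial action (S_g = S 1_g, 1_g central idempotent) of the groupoid G on the
   commutative ring S (= UNIV of type 'a) *)
definition unital_partial_action ::
  "'g set \<Rightarrow> ('g \<Rightarrow> 'g) \<Rightarrow> ('g \<Rightarrow> 'g) \<Rightarrow> ('g \<Rightarrow> 'g \<Rightarrow> 'g) \<Rightarrow> ('g \<Rightarrow> 'g)
    \<Rightarrow> ('g \<Rightarrow> 'a::comm_ring_1) \<Rightarrow> ('g \<Rightarrow> 'a \<Rightarrow> 'a) \<Rightarrow> bool" where
  "unital_partial_action G s t m iv e \<alpha> \<longleftrightarrow>
     (\<forall>g\<in>G. e g * e g = e g) \<and>
     (\<forall>g\<in>G. e g * e (t g) = e g) \<and>
     (\<forall>g\<in>G. bij_betw (\<alpha> g) (Sg e (iv g)) (Sg e g) \<and>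
        (\<forall>a\<in>Sg e (iv g). \<forall>b\<in>Sg e (iv g).
            \<alpha> g (a + b) = \<alpha> g a + \<alpha> g b \<and> \<alpha> g (a * b) = \<alpha> g a * \<alpha> g b)) \<and>
     (\<forall>x\<in>objs G s. \<forall>a\<in>Sg e x. \<alpha> x a = a) \<and>
     (\<forall>g\<in>G. \<forall>h\<in>G. s g = t h \<longrightarrow>
        {a \<in> Sg e (iv h). \<alpha> h a \<in> Sg e (iv g) \<inter> Sg e h} \<subseteq> Sg e (iv (m g h)) \<and>
        (\<forall>a \<in> Sg e (iv h). \<alpha> h a \<in> Sg e (iv g) \<inter> Sg e h \<longrightarrow>
            \<alpha> g (\<alpha> h a) = \<alpha> (m g h) a))"

definition global_action ::
  "'g set \<Rightarrow> ('g \<Rightarrow> 'g) \<Rightarrow> ('g \<Rightarrow> 'g) \<Rightarrow> ('g \<Rightarrow> 'g \<Rightarrow> 'g) \<Rightarrow> ('g \<Rightarrow> 'g)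
    \<Rightarrow> ('g \<Rightarrow> 'a::comm_ring_1) \<Rightarrow> ('g \<Rightarrow> 'a \<Rightarrow> 'a) \<Rightarrow> bool" where
  "global_action G s t m iv e \<alpha> \<longleftrightarrow>
     (\<forall>g\<in>G. \<forall>h\<in>G. s g = t h \<longrightarrow>
        {a \<in> Sg e (iv h). \<alpha> h a \<in> Sg e (iv g)} = Sg e (iv (m g h)) \<and>
        (\<forall>a \<in> Sg e (iv (m g h)). \<alpha> g (\<alpha> h a) = \<alpha> (m g h) a))"

definition fixed_ring ::
  "'g set \<Rightarrow> ('g \<Rightarrow> 'g) \<Rightarrow> ('g \<Rightarrow> 'a::comm_ring_1) \<Rightarrow> ('g \<Rightarrow> 'a \<Rightarrow> 'a) \<Rightarrow> 'a set \<Rightarrow> 'a set" where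
  "fixed_ring K iv e \<alpha> A = {a \<in> A. \<forall>k\<in>K. \<alpha> k (a * e (iv k)) = a * e k}"

definition partial_galois ::
  "'g set \<Rightarrow> ('g \<Rightarrow> 'g) \<Rightarrow> ('g \<Rightarrow> 'g) \<Rightarrow> ('g \<Rightarrow> 'a::comm_ring_1) \<Rightarrow> ('g \<Rightarrow> 'a \<Rightarrow> 'a) \<Rightarrow> bool" where
  "partial_galois G s iv e \<alpha> \<longleftrightarrow>
     (\<exists>n::nat. \<exists>a b :: nat \<Rightarrow> 'a. n \<ge> 1 \<and>
        (\<forall>g\<in>G. (\<Sum>i<n. a i * \<alpha> g (b i * e (iv g))) =
                 (if g \<in> objs G s then e g else 0)))"

end

theory Submission
  imports Defs
begin

context
  fixes G :: "'g set" and s t iv :: "'g \<Rightarrow> 'g" and m :: "'g \<Rightarrow> 'g \<Rightarrow> 'g"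
  assumes grpd: "groupoid G s t m iv"
begin

lemma gG: "g \<in> G \<Longrightarrow> s g \<in> G \<and> t g \<in> G \<and> s (s g) = s g \<and> t (s g) = s g
             \<and> s (t g) = t g \<and> t (t g) = t g"
  using grpd unfolding groupoid_def by blast

lemma gM: "g \<in> G \<Longrightarrow> h \<in> G \<Longrightarrow> s g = t h \<Longrightarrow> m g h \<in> G \<and> s (m g h) = s h \<and> t (m g h) = t g"
  using grpd unfolding groupoid_def by blast

lemma gA: "f \<in> G \<Longrightarrow> g \<in> G \<Longrightarrow> h \<in> G \<Longrightarrow> s f = t g \<Longrightarrow> s g = t h \<Longrightarrow> m (m f g) h = m f (m g h)"
  using grpd unfolding groupoid_def by blast

lemma gU: "g \<in> G \<Longrightarrow> m (t g) g = g \<and> m g (s g) = g"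
  using grpd unfolding groupoid_def by blast

lemma gI: "g \<in> G \<Longrightarrow> iv g \<in> G \<and> s (iv g) = t g \<and> t (iv g) = s g
             \<and> m g (iv g) = t g \<and> m (iv g) g = s g"
  using grpd unfolding groupoid_def by blast

lemma iv_obj: "x \<in> G \<Longrightarrow> s x = x \<Longrightarrow> iv x = x"
proof -
  assume x: "x \<in> G" "s x = x"
  have tx: "t x = x" using gG[OF x(1)] x(2) by metis
  have "m x (iv x) = x" using gI[OF x(1)] tx by simp
  moreover have "m (t (iv x)) (iv x) = iv x" using gU gI x(1) by blast
  moreover have "t (iv x) = x" using gI[OF x(1)] x(2) by simp
  ultimately show ?thesis by simp
qed

lemma iv_iv: "g \<in> G \<Longrightarrow> iv (iv g) = g"
proof -
  assume g: "g \<in> G"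
  define h where "h = iv g"
  define h' where "h' = iv h"
  have h: "h \<in> G" "s h = t g" "t h = s g" "m h g = s g" using gI[OF g] h_def by auto
  have h': "h' \<in> G" "s h' = t h" "m h' h = s h" using gI[OF h(1)] h'_def by auto
  have "h' = m h' (s h')" using gU[OF h'(1)] by simp
  also have "\<dots> = m h' (m h g)" using h h' by simp
  also have "\<dots> = m (m h' h) g" using gA[OF h'(1) h(1) g] h h' by simp
  also have "\<dots> = m (t g) g" using h h' by simp
  also have "\<dots> = g" using gU[OF g] by simp
  finally show ?thesis using h_def h'_def by simp
qed

lemma sub_self: "subgroupoid G G s t m iv"
  unfolding subgroupoid_def using gG gI gM by blast

context
  fixes K assumes K: "subgroupoid K G s t m iv"
begin

lemma K_sub: "K \<subseteq> G" and K_cl: "k \<in> K \<Longrightarrow> s k \<in> K \<and> t k \<in> K \<and> iv k \<in> K"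
  and K_m: "g \<in> K \<Longrightarrow> h \<in> K \<Longrightarrow> s g = t h \<Longrightarrow> m g h \<in> K"
  using K unfolding subgroupoid_def by blast+

lemma gc_refl: "x \<in> objs K s \<Longrightarrow> gconn K s t x x"
  unfolding objs_def gconn_def using K_cl K_sub gG by (metis image_iff subsetD)

lemma gc_sym: "gconn K s t x z \<Longrightarrow> gconn K s t z x"
  unfolding gconn_def using K_cl K_sub gI by (metis subsetD)

lemma gc_trans: "gconn K s t x z \<Longrightarrow> gconn K s t z w \<Longrightarrow> gconn K s t x w"
  unfolding gconn_def using K_m K_sub gM by (metis subsetD)

lemma gc_objs: "gconn K s t x z \<Longrightarrow> x \<in> objs K s \<and> z \<in> objs K s"
  unfolding gconn_def objs_def using K_cl K_sub gG by (metis image_iff subsetD)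

lemma s_objs: "k \<in> K \<Longrightarrow> s k \<in> objs K s"
  unfolding objs_def by simp

lemma comp_form: "C \<in> components K s t \<Longrightarrow> \<exists>x\<in>objs K s. C = {k\<in>K. gconn K s t x (s k)}"
  unfolding components_def using s_objs by auto

lemma comp_sub: "C \<in> components K s t \<Longrightarrow> C \<subseteq> K"
  using comp_form by blast

lemma comp_eq: "C \<in> components K s t \<Longrightarrow> z \<in> objs C s \<Longrightarrow> C = {k\<in>K. gconn K s t z (s k)}"
proof -
  assume C: "C \<in> components K s t" and z: "z \<in> objs C s"
  obtain x where x: "x \<in> objs K s" "C = {k\<in>K. gconn K s t x (s k)}" using comp_form[OF C] by blast
  obtain c where c: "c \<in> C" "z = s c" using z unfolding objs_def by blast
  have xz: "gconn K s t x z" using c x by blast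
  show ?thesis unfolding x(2) using xz gc_sym gc_trans by blast
qed

lemma comp_of: "x \<in> objs K s \<Longrightarrow> {k\<in>K. gconn K s t x (s k)} \<in> components K s t
   \<and> x \<in> objs {k\<in>K. gconn K s t x (s k)} s"
proof -
  assume x: "x \<in> objs K s"
  have "{k\<in>K. gconn K s t x (s k)} = {k \<in> K. s k \<in> {y \<in> objs K s. gconn K s t x y}}"
    using s_objs by auto
  hence 1: "{k\<in>K. gconn K s t x (s k)} \<in> components K s t"
    unfolding components_def using x by blast
  obtain k where k: "k \<in> K" "x = s k" using x unfolding objs_def by blast
  have "s k \<in> K" "s (s k) = s k" using K_cl K_sub gG k(1) by blast+
  hence "x \<in> {k\<in>K. gconn K s t x (s k)}" "s x = x" using gc_refl x k by auto
  hence "x \<in> objs {k\<in>K. gconn K s t x (s k)} s" unfolding objs_def by (metis image_eqI)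
  with 1 show ?thesis by blast
qed

end

lemma inter_sub: "subgroupoid H G s t m iv \<Longrightarrow> Gj \<in> components G s t \<Longrightarrow> subgroupoid (H \<inter> Gj) G s t m iv"
proof -
  assume H: "subgroupoid H G s t m iv" and Gj: "Gj \<in> components G s t"
  obtain x where x: "Gj = {k\<in>G. gconn G s t x (s k)}" using comp_form[OF sub_self Gj] by blast
  have HG: "H \<subseteq> G" using H unfolding subgroupoid_def by blast
  have A: "s h \<in> H \<inter> Gj \<and> t h \<in> H \<inter> Gj \<and> iv h \<in> H \<inter> Gj" if h: "h \<in> H \<inter> Gj" for h
  proof -
    have hG: "h \<in> G" using h HG by blast
    have xs: "gconn G s t x (s h)" using h x by blast
    have xt: "gconn G s t x (t h)" using gc_trans[OF sub_self xs] hG unfolding gconn_def by blast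
    have inH: "s h \<in> H" "t h \<in> H" "iv h \<in> H" using H h unfolding subgroupoid_def by auto
    have e: "s (s h) = s h" "s (t h) = t h" "s (iv h) = t h" "s h \<in> G" "t h \<in> G" "iv h \<in> G"
      using gG[OF hG] gI[OF hG] by auto
    show ?thesis
      using inH e xs xt by (simp add: x)
  qed
  have B: "m g h \<in> H \<inter> Gj" if g: "g \<in> H \<inter> Gj" and h: "h \<in> H \<inter> Gj" and gh: "s g = t h" for g h
  proof -
    have "g \<in> G" "h \<in> G" using g h HG by auto
    then have "m g h \<in> G" "s (m g h) = s h" using gM gh by auto
    moreover have "m g h \<in> H" using H g h gh unfolding subgroupoid_def by auto
    ultimately show "m g h \<in> H \<inter> Gj" using h unfolding x by auto
  qed
  show ?thesis unfolding subgroupoid_def using A B HG by blast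
qed

end


context
  fixes G H :: "'g set" and s t iv :: "'g \<Rightarrow> 'g" and m :: "'g \<Rightarrow> 'g \<Rightarrow> 'g"
    and y :: "'g set \<Rightarrow> 'g set \<Rightarrow> 'g"
  assumes grpd: "groupoid G s t m iv"
    and wide: "wide_subgroupoid H G s t m iv"
    and ychoice: "\<forall>Gj\<in>components G s t. \<forall>C\<in>components (H \<inter> Gj) s t. y Gj C \<in> objs C s"
begin

lemma Hsub: "subgroupoid H G s t m iv" using wide unfolding wide_subgroupoid_def by blast
lemma HG: "H \<subseteq> G" using Hsub unfolding subgroupoid_def by blast
lemma objsH: "objs G s \<subseteq> H" using wide unfolding wide_subgroupoid_def by blast

lemma objs_mono: "A \<subseteq> B \<Longrightarrow> objs A s \<subseteq> objs B s" unfolding objs_def by blast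

lemma yy_obj:
  assumes "Gj \<in> components G s t" "C \<in> components (H \<inter> Gj) s t"
  shows "y Gj C \<in> objs C s" "y Gj C \<in> objs Gj s" "y Gj C \<in> objs (H \<inter> Gj) s"
    "y Gj C \<in> objs G s" "y Gj C \<in> G" "s (y Gj C) = y Gj C"
proof -
  have sub: "subgroupoid (H \<inter> Gj) G s t m iv" using inter_sub[OF grpd Hsub assms(1)] .
  have C1: "C \<subseteq> H \<inter> Gj" using comp_sub[OF grpd sub assms(2)] .
  have G1: "Gj \<subseteq> G" using comp_sub[OF grpd sub_self[OF grpd] assms(1)] .
  show a: "y Gj C \<in> objs C s" using ychoice assms by blast
  show "y Gj C \<in> objs Gj s" "y Gj C \<in> objs (H \<inter> Gj) s" "y Gj C \<in> objs G s"
    using a objs_mono[of C "H \<inter> Gj"] objs_mono[of C Gj] objs_mono[of C G] C1 G1 by blast+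
  then obtain k where k: "k \<in> G" "y Gj C = s k" unfolding objs_def by blast
  then show "y Gj C \<in> G" "s (y Gj C) = y Gj C" using gG[OF grpd k(1)] by auto
qed

lemma gcH_G: "gconn H s t a b \<Longrightarrow> gconn G s t a b"
  unfolding gconn_def using HG by blast

lemma Gj_eq:
  assumes "Gj \<in> components G s t" "C \<in> components (H \<inter> Gj) s t"
  shows "Gj = {k\<in>G. gconn G s t (y Gj C) (s k)}"
  using comp_eq[OF grpd sub_self[OF grpd] assms(1) yy_obj(2)[OF assms]] .

lemma C_eq:
  assumes "Gj \<in> components G s t" "C \<in> components (H \<inter> Gj) s t"
  shows "C = {k\<in>H \<inter> Gj. gconn (H \<inter> Gj) s t (y Gj C) (s k)}"
  using comp_eq[OF grpd inter_sub[OF grpd Hsub assms(1)] assms(2) yy_obj(1)[OF assms]] .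

lemma Gj_mem:
  assumes "Gj \<in> components G s t" "C \<in> components (H \<inter> Gj) s t"
  shows "k \<in> Gj \<longleftrightarrow> k \<in> G \<and> gconn G s t (y Gj C) (s k)"
proof -
  have "k \<in> Gj \<longleftrightarrow> k \<in> {k\<in>G. gconn G s t (y Gj C) (s k)}"
    by (rule arg_cong[where f="\<lambda>A. k \<in> A"], rule Gj_eq[OF assms])
  thus ?thesis by simp
qed

lemma C_mem:
  assumes "Gj \<in> components G s t" "C \<in> components (H \<inter> Gj) s t"
  shows "k \<in> C \<longleftrightarrow> k \<in> H \<inter> Gj \<and> gconn (H \<inter> Gj) s t (y Gj C) (s k)"
proof -
  have "k \<in> C \<longleftrightarrow> k \<in> {k\<in>H \<inter> Gj. gconn (H \<inter> Gj) s t (y Gj C) (s k)}"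
    by (rule arg_cong[where f="\<lambda>A. k \<in> A"], rule C_eq[OF assms])
  thus ?thesis by simp
qed

lemma U:
  assumes p: "Gj \<in> components G s t" "C \<in> components (H \<inter> Gj) s t"
    and q: "Gj' \<in> components G s t" "C' \<in> components (H \<inter> Gj') s t"
    and c: "gconn H s t (y Gj C) (y Gj' C')"
  shows "Gj = Gj' \<and> C = C'"
proof -
  have cG: "gconn G s t (y Gj C) (y Gj' C')" using gcH_G[OF c] .
  have SG: "subgroupoid G G s t m iv" using sub_self[OF grpd] .
  have eqv: "gconn G s t (y Gj C) z \<longleftrightarrow> gconn G s t (y Gj' C') z" for z
    using cG gc_sym[OF grpd SG] gc_trans[OF grpd SG] by metis
  have GG: "Gj = Gj'"
    using Gj_mem[OF p] Gj_mem[OF q] eqv by blast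
  obtain h where h: "h \<in> H" "s h = y Gj C" "t h = y Gj' C'" using c unfolding gconn_def by blast
  have hG: "h \<in> G" using h HG by blast
  have "gconn G s t (y Gj C) (s h)" using h(2) gc_refl[OF grpd SG] yy_obj(4)[OF p] by simp
  hence "h \<in> Gj" using Gj_mem[OF p] hG by blast
  hence c2: "gconn (H \<inter> Gj) s t (y Gj C) (y Gj' C')" using h unfolding gconn_def by blast
  have sub: "subgroupoid (H \<inter> Gj) G s t m iv" using inter_sub[OF grpd Hsub p(1)] .
  have eqv2: "gconn (H \<inter> Gj) s t (y Gj C) z \<longleftrightarrow> gconn (H \<inter> Gj) s t (y Gj' C') z" for z
    using c2 gc_sym[OF grpd sub] gc_trans[OF grpd sub] by metis
  have "C = C'"
    using C_mem[OF p] C_mem[OF q] eqv2 GG by blast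
  with GG show ?thesis by blast
qed

lemma E:
  assumes x: "x \<in> objs G s"
  shows "\<exists>Gj C. Gj \<in> components G s t \<and> C \<in> components (H \<inter> Gj) s t \<and> gconn H s t (y Gj C) x"
proof -
  have SG: "subgroupoid G G s t m iv" using sub_self[OF grpd] .
  define Gj where "Gj = {k\<in>G. gconn G s t x (s k)}"
  have Gj: "Gj \<in> components G s t" "x \<in> objs Gj s" using comp_of[OF grpd SG x] Gj_def by auto
  have sub: "subgroupoid (H \<inter> Gj) G s t m iv" using inter_sub[OF grpd Hsub Gj(1)] .
  obtain k where k: "k \<in> Gj" "x = s k" using Gj(2) unfolding objs_def by blast
  have kG: "k \<in> G" using k Gj_def by blast
  have xx: "x \<in> G" "s x = x" using gG[OF grpd kG] k by auto
  have "x \<in> Gj" using xx gc_refl[OF grpd SG x] Gj_def by simp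
  moreover have "x \<in> H" using objsH x by blast
  ultimately have xK: "x \<in> objs (H \<inter> Gj) s" using xx unfolding objs_def by (metis IntI image_eqI)
  define C where "C = {k\<in>H \<inter> Gj. gconn (H \<inter> Gj) s t x (s k)}"
  have C: "C \<in> components (H \<inter> Gj) s t" using comp_of[OF grpd sub xK] C_def by auto
  obtain c where c: "c \<in> C" "y Gj C = s c" using yy_obj(1)[OF Gj(1) C] unfolding objs_def by blast
  have "gconn (H \<inter> Gj) s t x (s c)" using c(1) unfolding C_def by simp
  hence "gconn (H \<inter> Gj) s t x (y Gj C)" using c(2) by simp
  hence "gconn H s t x (y Gj C)" unfolding gconn_def by blast
  hence "gconn H s t (y Gj C) x" using gc_sym[OF grpd Hsub] by blast
  thus ?thesis using Gj C by blast
qed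

lemma Iso:
  assumes p: "Gj \<in> components G s t" "C \<in> components (H \<inter> Gj) s t"
    and g: "g \<in> H" "s g = y Gj C" "t g = y Gj C"
  shows "g \<in> isotropy C s t (y Gj C)"
proof -
  have SG: "subgroupoid G G s t m iv" using sub_self[OF grpd] .
  have sub: "subgroupoid (H \<inter> Gj) G s t m iv" using inter_sub[OF grpd Hsub p(1)] .
  have gG: "g \<in> G" using g HG by blast
  have "g \<in> Gj" using Gj_mem[OF p] gG g gc_refl[OF grpd SG yy_obj(4)[OF p]] by simp
  hence "g \<in> C" using C_mem[OF p] g gc_refl[OF grpd sub yy_obj(3)[OF p]] by simp
  thus ?thesis unfolding isotropy_def using g by blast
qed

end


context
  fixes G :: "'g set" and s t iv :: "'g \<Rightarrow> 'g" and m :: "'g \<Rightarrow> 'g \<Rightarrow> 'g"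
    and e :: "'g \<Rightarrow> 'a::comm_ring_1" and \<alpha> :: "'g \<Rightarrow> 'a \<Rightarrow> 'a"
  assumes grpd: "groupoid G s t m iv"
    and act: "unital_partial_action G s t m iv e \<alpha>"
    and glob: "global_action G s t m iv e \<alpha>"
begin

lemma e_idem: "g \<in> G \<Longrightarrow> e g * e g = e g"
  using act unfolding unital_partial_action_def by blast

lemma e_t0: "g \<in> G \<Longrightarrow> e g * e (t g) = e g"
  using act unfolding unital_partial_action_def by blast

lemma Sg_iff: "g \<in> G \<Longrightarrow> b \<in> Sg e g \<longleftrightarrow> b * e g = b"
  unfolding Sg_def using e_idem by (auto simp: mult.assoc) (metis)

lemma alpha_maps: "g \<in> G \<Longrightarrow> b \<in> Sg e (iv g) \<Longrightarrow> \<alpha> g b \<in> Sg e g"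
  using act unfolding unital_partial_action_def bij_betw_def by blast

lemma alpha_comp: "g \<in> G \<Longrightarrow> h \<in> G \<Longrightarrow> s g = t h \<Longrightarrow> b \<in> Sg e (iv (m g h)) \<Longrightarrow>
   \<alpha> g (\<alpha> h b) = \<alpha> (m g h) b"
  using glob unfolding global_action_def by blast

lemma glob_set: "g \<in> G \<Longrightarrow> h \<in> G \<Longrightarrow> s g = t h \<Longrightarrow>
   {a \<in> Sg e (iv h). \<alpha> h a \<in> Sg e (iv g)} = Sg e (iv (m g h))"
  using glob unfolding global_action_def by blast

lemma e_s: "g \<in> G \<Longrightarrow> e (iv g) = e (s g)"
proof -
  assume g: "g \<in> G"
  have I: "iv g \<in> G" "s (iv g) = t g" "t (iv g) = s g" "m (iv g) g = s g" using gI[OF grpd g] by auto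
  have sg: "s g \<in> G" "s (s g) = s g" using gG[OF grpd g] by auto
  have ivs: "iv (s g) = s g" using iv_obj[OF grpd sg] .
  have "Sg e (s g) \<subseteq> Sg e (iv g)" using glob_set[OF I(1) g I(2)] I(4) ivs by auto
  moreover have "e (s g) \<in> Sg e (s g)" using Sg_iff[OF sg(1)] e_idem[OF sg(1)] by simp
  ultimately have "e (s g) \<in> Sg e (iv g)" by blast
  hence 1: "e (s g) * e (iv g) = e (s g)" using Sg_iff[OF I(1)] by simp
  have 2: "e (iv g) * e (s g) = e (iv g)" using e_t0[OF I(1)] I(3) by simp
  from 1 2 show ?thesis by (simp add: mult.commute)
qed

lemma e_t: "g \<in> G \<Longrightarrow> e g = e (t g)"
proof -
  assume g: "g \<in> G"
  have I: "iv g \<in> G" "s (iv g) = t g" using gI[OF grpd g] by auto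
  show ?thesis using e_s[OF I(1)] iv_iv[OF grpd g] I by simp
qed

end


theorem proposition5p14:
  fixes G H :: "'g set" and s t iv :: "'g \<Rightarrow> 'g" and m :: "'g \<Rightarrow> 'g \<Rightarrow> 'g"
    and e :: "'g \<Rightarrow> 'a::comm_ring_1" and \<alpha> :: "'g \<Rightarrow> 'a \<Rightarrow> 'a"
    and y :: "'g set \<Rightarrow> 'g set \<Rightarrow> 'g"
  assumes grpd: "groupoid G s t m iv" and fin: "finite G"
    and act: "unital_partial_action G s t m iv e \<alpha>"
    and glob: "global_action G s t m iv e \<alpha>"
    and nz: "\<forall>g\<in>G. e g \<noteq> 0"
    and dsum_orth: "\<forall>x\<in>objs G s. \<forall>z\<in>objs G s. x \<noteq> z \<longrightarrow> e x * e z = 0"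
    and dsum_one: "(\<Sum>x\<in>objs G s. e x) = 1"
    and galois: "partial_galois G s iv e \<alpha>"
    and wide: "wide_subgroupoid H G s t m iv"
    and ychoice: "\<forall>Gj\<in>components G s t. \<forall>C\<in>components (H \<inter> Gj) s t. y Gj C \<in> objs C s"
  shows "\<exists>\<phi> :: 'a \<Rightarrow> ('g set \<times> 'g set \<Rightarrow> 'a).
           bij_betw \<phi> (fixed_ring H iv e \<alpha> UNIV)
             (PiE {(Gj, C). Gj \<in> components G s t \<and> C \<in> components (H \<inter> Gj) s t}
               (\<lambda>(Gj, C). fixed_ring (isotropy C s t (y Gj C)) iv e \<alpha> (Sg e (y Gj C)))) \<and>
           (\<forall>a\<in>fixed_ring H iv e \<alpha> UNIV. \<forall>b\<in>fixed_ring H iv e \<alpha> UNIV.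
              \<forall>p\<in>{(Gj, C). Gj \<in> components G s t \<and> C \<in> components (H \<inter> Gj) s t}.
                \<phi> (a + b) p = \<phi> a p + \<phi> b p \<and> \<phi> (a * b) p = \<phi> a p * \<phi> b p) \<and>
           (\<forall>p\<in>{(Gj, C). Gj \<in> components G s t \<and> C \<in> components (H \<inter> Gj) s t}.
                \<phi> 1 p = e (case p of (Gj, C) \<Rightarrow> y Gj C))"
proof -
  define P where "P = {(Gj, C). Gj \<in> components G s t \<and> C \<in> components (H \<inter> Gj) s t}"
  define F where "F = (\<lambda>(Gj, C). fixed_ring (isotropy C s t (y Gj C)) iv e \<alpha> (Sg e (y Gj C)))"
  define yy where "yy = (\<lambda>p::'g set \<times> 'g set. case p of (Gj, C) \<Rightarrow> y Gj C)"
  define FR where "FR = fixed_ring H iv e \<alpha> UNIV"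
  define Ob where "Ob = objs G s"
  define \<phi> where "\<phi> = (\<lambda>a. restrict (\<lambda>p. a * e (yy p)) P)"
  have Hs: "subgroupoid H G s t m iv" using Hsub[OF grpd wide ychoice] .
  have HG: "H \<subseteq> G" using Hs unfolding subgroupoid_def by blast
  have finO: "finite Ob" unfolding Ob_def objs_def using fin by simp
  have Oprops: "x \<in> G \<and> s x = x \<and> t x = x \<and> iv x = x \<and> e x * e x = e x" if xO: "x \<in> Ob" for x
  proof -
    obtain g where g: "g \<in> G" "x = s g" using xO unfolding Ob_def objs_def by blast
    have "x \<in> G" "s x = x" "t x = x" using gG[OF grpd g(1)] g(2) by auto
    thus ?thesis using iv_obj[OF grpd] e_idem[OF grpd act glob] by blast
  qed
  have sO: "s g \<in> Ob" if "g \<in> G" for g unfolding Ob_def objs_def using that by simp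
  have tO: "t g \<in> Ob" if "g \<in> G" for g
    using gG[OF grpd that] sO by metis
  have eS: "e (iv g) = e (s g)" if "g \<in> G" for g using e_s[OF grpd act glob that] .
  have eT: "e g = e (t g)" if "g \<in> G" for g using e_t[OF grpd act glob that] .
  have SgI: "b \<in> Sg e g \<longleftrightarrow> b * e g = b" if "g \<in> G" for g b using Sg_iff[OF grpd act glob that] .
  have FRI: "a \<in> FR \<longleftrightarrow> (\<forall>k\<in>H. \<alpha> k (a * e (iv k)) = a * e k)" for a
    unfolding FR_def fixed_ring_def by simp
  have Fx: "\<alpha> h (a * e (s h)) = a * e (t h)" if "a \<in> FR" "h \<in> H" for a h
    using FRI that eS eT HG by (metis subsetD)
  have Pyy: "yy p \<in> Ob \<and> yy p \<in> G \<and> s (yy p) = yy p" if pP: "p \<in> P" for p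
  proof -
    obtain Gj C where p: "p = (Gj, C)" by (cases p)
    show ?thesis using pP yy_obj(4-6)[OF grpd wide ychoice, of Gj C] unfolding p P_def yy_def Ob_def by auto
  qed
  have UU: "p = q" if pq: "p \<in> P" "q \<in> P" "gconn H s t (yy p) (yy q)" for p q
  proof -
    obtain Gj C where p: "p = (Gj, C)" by (cases p)
    obtain Gj' C' where q: "q = (Gj', C')" by (cases q)
    show ?thesis using U[OF grpd wide ychoice, of Gj C Gj' C'] pq unfolding p q P_def yy_def by auto
  qed
  have EE: "\<exists>p\<in>P. \<exists>h\<in>H. s h = yy p \<and> t h = x" if xO: "x \<in> Ob" for x
  proof -
    obtain Gj C where "Gj \<in> components G s t" "C \<in> components (H \<inter> Gj) s t" "gconn H s t (y Gj C) x"
      using E[OF grpd wide ychoice, of x] xO unfolding Ob_def by blast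
    thus ?thesis unfolding P_def yy_def gconn_def by force
  qed
  have FP: "f p \<in> Sg e (yy p) \<and> (\<forall>g\<in>H. s g = yy p \<longrightarrow> t g = yy p \<longrightarrow> \<alpha> g (f p) = f p)"
    if f: "f \<in> PiE P F" and p: "p \<in> P" for f p
  proof -
    obtain Gj C where pp: "p = (Gj, C)" by (cases p)
    have fp: "f p \<in> F p" using f p by (simp add: PiE_iff)
    hence fpS: "f p \<in> Sg e (yy p)" unfolding F_def pp yy_def fixed_ring_def by simp
    have yG: "yy p \<in> G" using Pyy p by blast
    have fpy: "f p * e (yy p) = f p" using fpS SgI yG by blast
    have "\<alpha> g (f p) = f p" if g: "g \<in> H" "s g = yy p" "t g = yy p" for g
    proof -
      have gi: "g \<in> isotropy C s t (y Gj C)"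
        using Iso[OF grpd wide ychoice, of Gj C g] p g unfolding pp P_def yy_def by auto
      have "\<alpha> g (f p * e (iv g)) = f p * e g" using fp gi unfolding F_def pp fixed_ring_def by auto
      moreover have "e (iv g) = e (yy p)" "e g = e (yy p)" using eS eT g HG by auto
      ultimately show ?thesis using fpy by simp
    qed
    thus ?thesis using fpS by blast
  qed
  have decomp: "a = (\<Sum>x\<in>Ob. a * e x)" for a :: 'a
  proof -
    have "a = a * (\<Sum>x\<in>Ob. e x)" using dsum_one Ob_def by simp
    thus ?thesis by (simp add: sum_distrib_left)
  qed
  have orth: "e x * e z = 0" if "x \<in> Ob" "z \<in> Ob" "x \<noteq> z" for x z
    using dsum_orth that Ob_def by blast
  have into: "\<phi> a \<in> PiE P F" if a: "a \<in> FR" for a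
    unfolding \<phi>_def
  proof (rule iffD2[OF restrict_PiE_iff], rule ballI)
    fix p assume p: "p \<in> P"
    obtain Gj C where pp: "p = (Gj, C)" by (cases p)
    have yG: "yy p \<in> G" using Pyy p by blast
    have C1: "C \<subseteq> H" using comp_sub[OF grpd inter_sub[OF grpd Hs], of Gj C] p unfolding pp P_def by auto
    have "a * e (yy p) \<in> Sg e (yy p)" unfolding Sg_def by blast
    moreover have "\<alpha> k (a * e (yy p) * e (iv k)) = a * e (yy p) * e k"
      if k: "k \<in> isotropy C s t (yy p)" for k
    proof -
      have kH: "k \<in> H" "s k = yy p" "t k = yy p" using k C1 unfolding isotropy_def by auto
      have "e (iv k) = e (yy p)" "e k = e (yy p)" using eS eT kH HG by auto
      moreover have "e (yy p) * e (yy p) = e (yy p)" using Oprops Pyy p by blast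
      ultimately show ?thesis using Fx[OF a kH(1)] kH by (simp add: mult.assoc)
    qed
    ultimately show "a * e (yy p) \<in> F p" unfolding F_def pp yy_def fixed_ring_def by simp
  qed
  have inj: "inj_on \<phi> FR"
  proof (rule inj_onI)
    fix a b assume a: "a \<in> FR" and b: "b \<in> FR" and ab: "\<phi> a = \<phi> b"
    have "a * e x = b * e x" if x: "x \<in> Ob" for x
    proof -
      obtain p h where p: "p \<in> P" "h \<in> H" "s h = yy p" "t h = x" using EE x by blast
      have "a * e (yy p) = b * e (yy p)" using fun_cong[OF ab, of p] p unfolding \<phi>_def by simp
      thus ?thesis using Fx[OF a p(2)] Fx[OF b p(2)] p by metis
    qed
    hence "(\<Sum>x\<in>Ob. a * e x) = (\<Sum>x\<in>Ob. b * e x)" by (rule sum.cong[OF refl])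
    thus "a = b" using decomp by metis
  qed
  have surj: "f \<in> \<phi> ` FR" if f: "f \<in> PiE P F" for f
  proof -
    have "\<forall>x\<in>Ob. \<exists>ph. fst ph \<in> P \<and> snd ph \<in> H \<and> s (snd ph) = yy (fst ph) \<and> t (snd ph) = x"
    proof
      fix x assume "x \<in> Ob"
      then obtain p h where "p \<in> P" "h \<in> H" "s h = yy p" "t h = x" using EE by blast
      thus "\<exists>ph. fst ph \<in> P \<and> snd ph \<in> H \<and> s (snd ph) = yy (fst ph) \<and> t (snd ph) = x"
        by (intro exI[of _ "(p, h)"]) simp
    qed
    then obtain c where c: "\<forall>x\<in>Ob. fst (c x) \<in> P \<and> snd (c x) \<in> H \<and> s (snd (c x)) = yy (fst (c x)) \<and> t (snd (c x)) = x"
      by (metis (no_types) bchoice[elim_format])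
    define px where "px = (\<lambda>x. fst (c x))"
    define hx where "hx = (\<lambda>x. snd (c x))"
    have pxhx: "\<forall>x\<in>Ob. px x \<in> P \<and> hx x \<in> H \<and> s (hx x) = yy (px x) \<and> t (hx x) = x"
      using c unfolding px_def hx_def by blast
    define T where "T = (\<lambda>x. \<alpha> (hx x) (f (px x)))"
    define a where "a = (\<Sum>x\<in>Ob. T x)"
    have TS: "T x * e x = T x" if x: "x \<in> Ob" for x
    proof -
      have h: "hx x \<in> G" "px x \<in> P" "s (hx x) = yy (px x)" "t (hx x) = x" using pxhx x HG by auto
      have "f (px x) \<in> Sg e (yy (px x))" using FP f h(2) by blast
      moreover have "e (iv (hx x)) = e (yy (px x))" using eS h by simp
      ultimately have "f (px x) \<in> Sg e (iv (hx x))" unfolding Sg_def by simp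
      hence "T x \<in> Sg e (hx x)" unfolding T_def using alpha_maps[OF grpd act glob h(1)] by blast
      hence "T x * e (hx x) = T x" using SgI h by blast
      thus ?thesis using eT h by simp
    qed
    have aez: "a * e z = T z" if z: "z \<in> Ob" for z
    proof -
      have "a * e z = (\<Sum>x\<in>Ob. T x * e z)" unfolding a_def by (simp add: sum_distrib_right)
      also have "\<dots> = T z * e z + (\<Sum>x\<in>Ob - {z}. T x * e z)" using sum.remove[OF finO z] by simp
      also have "(\<Sum>x\<in>Ob - {z}. T x * e z) = 0"
      proof (rule sum.neutral, rule ballI)
        fix x assume x: "x \<in> Ob - {z}"
        have "T x * e z = T x * (e x * e z)" using TS[of x] x by (metis DiffD1 mult.assoc)
        thus "T x * e z = 0" using orth[of x z] x z by simp
      qed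
      finally show ?thesis using TS z by simp
    qed
    have Tyy: "T (yy p) = f p" if p: "p \<in> P" for p
    proof -
      have yO: "yy p \<in> Ob" using Pyy p by blast
      have h: "px (yy p) \<in> P" "hx (yy p) \<in> H" "s (hx (yy p)) = yy (px (yy p))" "t (hx (yy p)) = yy p"
        using pxhx yO by auto
      have "gconn H s t (yy (px (yy p))) (yy p)" using h unfolding gconn_def by blast
      hence pe: "px (yy p) = p" using UU h(1) p by blast
      show ?thesis unfolding T_def pe using FP[OF f p] h pe by simp
    qed
    have phia: "\<phi> a = f"
    proof
      fix p show "\<phi> a p = f p"
      proof (cases "p \<in> P")
        case True
        have "\<phi> a p = a * e (yy p)" unfolding \<phi>_def using True by simp
        also have "\<dots> = T (yy p)" using Pyy[OF True] by (intro aez) blast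
        also have "\<dots> = f p" by (rule Tyy[OF True])
        finally show ?thesis .
      next
        case False
        have "\<phi> a p = undefined" unfolding \<phi>_def using False by simp
        also have "undefined = f p" using PiE_arb[OF f False] by simp
        finally show ?thesis .
      qed
    qed
    have aFR: "a \<in> FR" unfolding FRI
    proof
      fix k assume kH: "k \<in> H"
      have kG: "k \<in> G" using kH HG by blast
      define u where "u = s k"
      define v where "v = t k"
      have uv: "u \<in> Ob" "v \<in> Ob" using sO tO kG u_def v_def by auto
      have hu: "px u \<in> P" "hx u \<in> H" "s (hx u) = yy (px u)" "t (hx u) = u" using pxhx uv by auto
      have hv: "px v \<in> P" "hx v \<in> H" "s (hx v) = yy (px v)" "t (hx v) = v" using pxhx uv by auto
      have c1: "gconn H s t (yy (px u)) v" using hu kH u_def v_def gc_trans[OF grpd Hs]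
        unfolding gconn_def by blast
      have c2: "gconn H s t (yy (px v)) v" using hv unfolding gconn_def by blast
      have "gconn H s t (yy (px u)) (yy (px v))" using c1 c2 gc_sym[OF grpd Hs] gc_trans[OF grpd Hs] by blast
      hence puv: "px u = px v" using UU hu hv by blast
      define p where "p = px u"
      define h1 where "h1 = hx u"
      define h2 where "h2 = hx v"
      have h1: "h1 \<in> H" "h1 \<in> G" "s h1 = yy p" "t h1 = u" using hu HG h1_def p_def by auto
      have h2: "h2 \<in> H" "h2 \<in> G" "s h2 = yy p" "t h2 = v" using hv HG h2_def p_def puv by auto
      have pP: "p \<in> P" using hu p_def by simp
      have lhs: "a * e (iv k) = T u" using aez uv eS kG u_def by simp
      have rhs: "a * e k = T v" using aez uv eT kG v_def by simp
      have Tu: "T u = \<alpha> h1 (f p)" unfolding T_def h1_def p_def ..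
      have Tv: "T v = \<alpha> h2 (f p)" unfolding T_def h2_def p_def puv ..
      define kh where "kh = m k h1"
      have kh: "kh \<in> G" "s kh = yy p" "t kh = v" using gM[OF grpd kG h1(2)] h1 u_def v_def kh_def by auto
      have khH: "kh \<in> H" using Hs kH h1 u_def kh_def unfolding subgroupoid_def by auto
      have i2: "iv h2 \<in> G" "iv h2 \<in> H" "s (iv h2) = v" "t (iv h2) = yy p" "m h2 (iv h2) = v"
        using gI[OF grpd h2(2)] h2 Hs unfolding subgroupoid_def by auto
      define g where "g = m (iv h2) kh"
      have g: "g \<in> G" "g \<in> H" "s g = yy p" "t g = yy p"
        using gM[OF grpd i2(1) kh(1)] i2 kh khH Hs g_def unfolding subgroupoid_def by auto
      have hg: "m h2 g = kh"
      proof -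
        have "m h2 g = m (m h2 (iv h2)) kh" using gA[OF grpd h2(2) i2(1) kh(1)] h2 i2 kh g_def by simp
        also have "\<dots> = m (t kh) kh" using i2 kh by simp
        also have "\<dots> = kh" using gU[OF grpd kh(1)] by simp
        finally show ?thesis .
      qed
      have fpS: "f p \<in> Sg e (yy p)" using FP[OF f pP] by blast
      have ivkh: "e (iv kh) = e (yy p)" using eS kh by simp
      have fpS2: "f p \<in> Sg e (iv kh)" using fpS ivkh unfolding Sg_def by simp
      have "\<alpha> k (T u) = \<alpha> kh (f p)" unfolding Tu kh_def
        using alpha_comp[OF grpd act glob kG h1(2)] h1 u_def fpS2 kh_def by simp
      also have "\<dots> = \<alpha> h2 (\<alpha> g (f p))"
        using alpha_comp[OF grpd act glob h2(2) g(1)] h2 g hg fpS2 by simp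
      also have "\<alpha> g (f p) = f p" using FP[OF f pP] g by blast
      finally show "\<alpha> k (a * e (iv k)) = a * e k" using lhs rhs Tv by simp
    qed
    show ?thesis using aFR phia by blast
  qed
  have bij: "bij_betw \<phi> FR (PiE P F)"
    unfolding bij_betw_def using inj into surj by blast
  have hom: "\<phi> (a + b) p = \<phi> a p + \<phi> b p \<and> \<phi> (a * b) p = \<phi> a p * \<phi> b p" if p: "p \<in> P" for a b p
  proof -
    have "e (yy p) * e (yy p) = e (yy p)" using Oprops Pyy p by blast
    hence "a * b * e (yy p) = a * e (yy p) * (b * e (yy p))" by (metis mult.assoc mult.commute)
    thus ?thesis unfolding \<phi>_def using p by (simp add: distrib_right)
  qed
  have one: "\<phi> 1 p = e (case p of (Gj, C) \<Rightarrow> y Gj C)" if p: "p \<in> P" for p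
    unfolding \<phi>_def yy_def using p by simp
  have main: "bij_betw \<phi> FR (PiE P F) \<and>
     (\<forall>a\<in>FR. \<forall>b\<in>FR. \<forall>p\<in>P. \<phi> (a + b) p = \<phi> a p + \<phi> b p \<and> \<phi> (a * b) p = \<phi> a p * \<phi> b p) \<and>
     (\<forall>p\<in>P. \<phi> 1 p = e (case p of (Gj, C) \<Rightarrow> y Gj C))"
  proof -
    have A: "\<forall>a\<in>FR. \<forall>b\<in>FR. \<forall>p\<in>P. \<phi> (a + b) p = \<phi> a p + \<phi> b p \<and> \<phi> (a * b) p = \<phi> a p * \<phi> b p"
      using hom by blast
    have B: "\<forall>p\<in>P. \<phi> 1 p = e (case p of (Gj, C) \<Rightarrow> y Gj C)" using one by blast
    show ?thesis using bij A B by blast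
  qed
  show ?thesis
    apply (rule exI[of _ \<phi>])
    using main unfolding P_def F_def FR_def .
qed

end
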